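(* For every integer $n\geq 1$, $$F_n(x):=\sum_{k\geq 0} a(n,k)\,x^k=\prod_{i=0}^{n-1}\left(1+x^{2^i}+x^{2\cdot 2^i}\right).$$
   Context: Stern's triangle is the array of integers $a(n,k)$, $n\geq 0$, $k\in\mathbb{Z}$, defined as follows. Row $n$ consists of the entries $a(n,0),\dots,a(n,N_n)$ with $N_n=2^{n+1}-2$, and $a(n,k)=0$ if $k<0$ or $k>N_n$. Row $0$ is the single entry $a(0,0)=1$. Row $n+1$ is obtained from row $n$ (with $N=N_n$) by $a(n+1,0)=1$, $a(n+1,2j+1)=a(n,j)$ for $0\leq j\leq N$, $a(n+1,2j+2)=a(n,j)+a(n,j+1)$ for $0\leq j\leq N-1$, and $a(n+1,2N+2)=1$. In words: each entry of row $n$ is copied directly below into row $n+1$, the sum of each two consecutive entries of row $n$ is placed between them in row $n+1$, and row $n+1$ begins and ends with $1$. The first rows are $1$; $1,1,1$; $1,1,2,1,2,1,1$; $1,1,2,1,3,2,3,1,3,2,3,1,2,1,1$. *)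

theory Defs
  imports "HOL-Computational_Algebra.Polynomial"
begin

fun stern_mid :: "nat list \<Rightarrow> nat list" where
  "stern_mid [] = []"
| "stern_mid [x] = [x]"
| "stern_mid (x # y # ys) = x # (x + y) # stern_mid (y # ys)"

fun stern_row :: "nat \<Rightarrow> nat list" where
  "stern_row 0 = [1]"
| "stern_row (Suc n) = 1 # stern_mid (stern_row n) @ [1]"

definition stern_a :: "nat \<Rightarrow> nat \<Rightarrow> nat" where
  "stern_a n k = (if k < length (stern_row n) then stern_row n ! k else 0)"

end

theory Submission
  imports Defs
begin

fun ev :: "nat list \<Rightarrow> 'a::comm_ring_1 \<Rightarrow> 'a" where
  "ev [] x = 0"
| "ev (a # as) x = of_nat a + x * ev as x"

lemma ev_sum: "ev xs x = (\<Sum>k<length xs. of_nat (xs ! k) * x ^ k)"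
  by (induction xs) (simp_all add: sum.lessThan_Suc_shift sum_distrib_left algebra_simps del: sum.lessThan_Suc)

lemma mid_len: "length (stern_mid xs) = 2 * length xs - 1"
  by (induction xs rule: stern_mid.induct) auto

lemma G: "ev (y # stern_mid (y # ys) @ [last (y # ys)]) x = (1 + x + x^2) * ev (y # ys) (x^2)"
proof (induction ys arbitrary: y)
  case Nil
  then show ?case by (simp add: algebra_simps power2_eq_square)
next
  case (Cons z zs)
  have IH: "of_nat z + x * ev (stern_mid (z # zs) @ [last (z # zs)]) x
      = (1 + x + x^2) * ev (z # zs) (x^2)" using Cons.IH[of z] by simp
  have "ev (y # stern_mid (y # z # zs) @ [last (y # z # zs)]) x
     = (1 + x + x^2) * of_nat y + x^2 * (of_nat z + x * ev (stern_mid (z # zs) @ [last (z # zs)]) x)"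
    by (simp add: algebra_simps power2_eq_square)
  also have "\<dots> = (1 + x + x^2) * ev (y # z # zs) (x^2)"
    unfolding IH by (simp add: algebra_simps)
  finally show ?case .
qed

lemma row_shape: "\<exists>ys. stern_row n = 1 # ys \<and> last (stern_row n) = 1"
  by (cases n) auto

lemma row_len: "length (stern_row n) = 2^(n+1) - 1"
proof (induction n)
  case 0 then show ?case by simp
next
  case (Suc n)
  have "(2::nat)^(n+1) \<ge> 2" using one_le_power[of "2::nat" n] by simp
  obtain m where m: "(2::nat)^n = Suc m" using not0_implies_Suc by (metis power_not_zero zero_neq_numeral)
  show ?case using Suc m by (simp add: mid_len)
qed

lemma row_ev: "ev (stern_row n) x = (\<Prod>i<n. 1 + x ^ (2^i) + x ^ (2 * 2^i))"
proof (induction n arbitrary: x)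
  case 0 then show ?case by simp
next
  case (Suc n)
  obtain ys where ys: "stern_row n = 1 # ys" "last (stern_row n) = 1" using row_shape by blast
  have "ev (stern_row (Suc n)) x = ev (1 # stern_mid (1 # ys) @ [last (1 # ys)]) x"
    using ys by simp
  also have "\<dots> = (1 + x + x^2) * ev (stern_row n) (x^2)" using G ys by metis
  also have "\<dots> = (1 + x + x^2) * (\<Prod>i<n. 1 + x ^ (2^Suc i) + x ^ (2 * 2^Suc i))"
    using Suc by (simp add: power_mult[symmetric] mult.commute)
  also have "\<dots> = (\<Prod>i<Suc n. 1 + x ^ (2^i) + x ^ (2 * 2^i))"
    by (simp add: prod.lessThan_Suc_shift mult_ac del: prod.lessThan_Suc)
  finally show ?case .
qed

theorem theorem1p1:
  fixes n :: nat and x :: "'a :: comm_ring_1"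
  assumes "n \<ge> 1"
  shows "(\<Sum>k\<le>2^(n+1) - 2. of_nat (stern_a n k) * x ^ k)
           = (\<Prod>i<n. 1 + x ^ (2^i) + x ^ (2 * 2^i))"
proof -
  have p: "(2::nat)^(n+1) \<ge> 2" using one_le_power[of "2::nat" n] by simp
  have "{..2^(n+1) - 2} = {..<length (stern_row n)}" 
  proof -
    obtain m where m: "(2::nat)^n = Suc m" using not0_implies_Suc by (metis power_not_zero zero_neq_numeral)
    show ?thesis using m by (auto simp: row_len)
  qed
  then have "(\<Sum>k\<le>2^(n+1) - 2. of_nat (stern_a n k) * x ^ k)
      = (\<Sum>k<length (stern_row n). of_nat (stern_row n ! k) * x ^ k)"
    by (simp add: stern_a_def)
  also have "\<dots> = ev (stern_row n) x" by (simp add: ev_sum)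
  finally show ?thesis using row_ev by simp
qed

end
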